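(* Let $s_1 \geq s_2 \geq \dots \geq s_n$ be the side lengths of a sequence of squares with $s_1 \leq 0.295$. Consider the following packing procedure in the unit disk $\mathcal{D}$: an axis-parallel square container $\mathcal{X}$ of side length $1.388$ is placed concentric with $\mathcal{D}$, and four square containers $\mathcal{X}_1,\dots,\mathcal{X}_4$ of side length $0.295$ are placed inside $\mathcal{D}$, one adjacent to each side of $\mathcal{X}$ (outside $\mathcal{X}$); the square $s_i$ is placed into $\mathcal{X}_i$ for $i = 1,\dots,4$, and the squares $s_5,\dots,s_n$ are packed into $\mathcal{X}$ using \textsc{Shelf Packing}. If this procedure fails to pack the sequence, then $\sum_{i=1}^n s_i^2 > \frac{8}{5}$.
   Context: $\mathcal{D}$ denotes the disk of radius $1$. \textsc{Shelf Packing} into an axis-parallel square container processes the squares in order of non-increasing side length and places them axis-parallel in horizontal shelves stacked from the bottom upward: the first square of a shelf determines its height, subsequent squares are placed next to each other along the shelf's bottom from left to right, and when the next square does not fit into the remaining width of the current shelf, a new shelf is opened on top of the current one starting with that square. It fails if some square would have to be placed in a shelf exceeding the container's height. The procedure fails to pack the sequence if \textsc{Shelf Packing} fails to pack $s_5,\dots,s_n$ into $\mathcal{X}$. *)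

theory Defs
  imports Complex_Main
begin

text \<open>Shelf Packing of a list of square side lengths (processed in the given order,
  which is assumed non-increasing) into an axis-parallel W x H container.
  State: y = bottom of the current shelf, h = its height, w = width already used in it.\<close>

fun shelf_aux :: "real \<Rightarrow> real \<Rightarrow> real \<Rightarrow> real \<Rightarrow> real \<Rightarrow> real list \<Rightarrow> bool" where
  "shelf_aux W H y h w [] = True"
| "shelf_aux W H y h w (s # ss) =
     (if w + s \<le> W then shelf_aux W H y h (w + s) ss
      else (s \<le> W \<and> y + h + s \<le> H \<and> shelf_aux W H (y + h) s s ss))"

text \<open>Initially no shelf is open: modelled as a full shelf of height 0 at the bottom,
  so the first (positive) square opens the first shelf at height 0.\<close>
definition shelf_packs :: "real \<Rightarrow> real \<Rightarrow> real list \<Rightarrow> bool" where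
  "shelf_packs W H ss = shelf_aux W H 0 0 W ss"

end

theory Submission
  imports Defs
begin

lemma shelf_inv:
  fixes W H a :: real
  assumes "sorted_wrt (\<lambda>x y. y \<le> x) ss" "\<forall>x\<in>set ss. 0 \<le> x \<and> x \<le> m"
    "m \<le> h" "h \<le> a" "h \<le> w" "a < W"
    "P \<ge> (W-a)*(y+h-a) + a^2 + (w-h)*m"
    "\<not> shelf_aux W H y h w ss"
  shows "P + sum_list (map (\<lambda>x. x^2) ss) > (W-a)*(H-a) + a^2"
  using assms
proof (induction ss arbitrary: y h w m P)
  case Nil
  then show ?case by simp
next
  case (Cons s ss)
  have s0: "0 \<le> s" "s \<le> m" using Cons.prems(2) by auto
  have srt: "sorted_wrt (\<lambda>x y. y \<le> x) ss" "\<forall>x\<in>set ss. 0 \<le> x \<and> x \<le> s"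
    using Cons.prems(1,2) by auto
  have sq: "(0::real) \<le> sum_list (map (\<lambda>x. x^2) ss)"
    by (induction ss) auto
  have wm: "(w-h)*m \<ge> (w-h)*s" using s0 Cons.prems(5) by (simp add: mult_left_mono)
  show ?case
  proof (cases "w + s \<le> W")
    case True
    then have ns: "\<not> shelf_aux W H y h (w+s) ss" using Cons.prems(8) by simp
    have "P + s^2 \<ge> (W-a)*(y+h-a) + a^2 + (w+s-h)*s"
      using Cons.prems(7) wm by (simp add: algebra_simps power2_eq_square)
    from Cons.IH[OF srt, of h "w+s" y "P + s^2"] ns this s0 Cons.prems
    show ?thesis by (simp add: add.assoc)
  next
    case False
    then have ns: "\<not> (s \<le> W \<and> y + h + s \<le> H \<and> shelf_aux W H (y + h) s s ss)"
      using Cons.prems(8) by simp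
    have k: "(w-h)*s + s^2 \<ge> (W-a)*s"
    proof -
      have "w - h + s \<ge> W - a" using False Cons.prems(4) by linarith
      then have "(w - h + s)*s \<ge> (W-a)*s" using s0 by (simp add: mult_right_mono)
      then show ?thesis by (simp add: algebra_simps power2_eq_square)
    qed
    have P2: "P + s^2 \<ge> (W-a)*(y+h+s-a) + a^2"
      using Cons.prems(7) wm k by (simp add: algebra_simps)
    have sW: "s \<le> W" using s0 Cons.prems(3,4,6) by linarith
    show ?thesis
    proof (cases "y + h + s \<le> H")
      case False
      have "(W-a)*(y+h+s-a) > (W-a)*(H-a)" using False Cons.prems(6) by simp
      then show ?thesis using P2 sq by simp
    next
      case True
      then have ns2: "\<not> shelf_aux W H (y + h) s s ss" using ns sW by simp
      have "P + s^2 \<ge> (W-a)*((y+h)+s-a) + a^2 + (s-s)*s" using P2 by simp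
      from Cons.IH[OF srt, of s s "y+h" "P + s^2"] ns2 this s0 Cons.prems
      show ?thesis by (simp add: add.assoc)
    qed
  qed
qed

theorem lemma15:
  fixes s :: "nat \<Rightarrow> real" and n :: nat
  assumes pos: "\<forall>i\<in>{1..n}. 0 < s i"
    and noninc: "\<forall>i. 1 \<le> i \<and> i < n \<longrightarrow> s (Suc i) \<le> s i"
    and s1: "s 1 \<le> 0.295"
    and fails: "\<not> shelf_packs 1.388 1.388 (map s [5..<n+1])"
  shows "(\<Sum>i=1..n. (s i)\<^sup>2) > 8 / 5"
proof -
  have monoA: "\<forall>j. i \<le> j \<longrightarrow> j \<le> n \<longrightarrow> s j \<le> s i" if "1 \<le> i" for i
  proof
    fix j show "i \<le> j \<longrightarrow> j \<le> n \<longrightarrow> s j \<le> s i"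
    proof (induction j)
      case 0 then show ?case using that by simp
    next
      case (Suc j)
      show ?case
      proof (cases "i = Suc j")
        case True then show ?thesis by simp
      next
        case False
        show ?thesis
        proof (intro impI)
          assume h: "i \<le> Suc j" "Suc j \<le> n"
          then have "i \<le> j" using False by simp
          moreover have "s (Suc j) \<le> s j" using noninc h that \<open>i \<le> j\<close> by simp
          ultimately show "s (Suc j) \<le> s i" using Suc.IH h by simp
        qed
      qed
    qed
  qed
  have mono: "s j \<le> s i" if "1 \<le> i" "i \<le> j" "j \<le> n" for i j
    using monoA[OF that(1)] that by blast
  have n5: "n \<ge> 5"
  proof (rule ccontr)
    assume "\<not> n \<ge> 5"
    then have "[5..<n+1] = []" by simp
    then show False using fails by (simp add: shelf_packs_def)
  qed
  define a where "a = s 5"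
  define W :: real where "W = 1.388"
  define rest where "rest = map s [6..<n+1]"
  have a0: "0 < a" using pos n5 a_def by simp
  have aW: "a \<le> 0.295" using mono[of 1 5] n5 s1 a_def by simp
  have ml: "map s [5..<n+1] = a # rest"
    using n5 by (cases "n = 5") (simp_all add: a_def rest_def upt_conv_Cons)
  have "\<not> shelf_aux W W 0 a a rest"
    using fails a0 aW unfolding ml shelf_packs_def W_def by simp
  moreover have "sorted_wrt (\<lambda>x y. y \<le> x) rest"
    unfolding rest_def sorted_wrt_map
    by (rule sorted_wrt_mono_rel[OF _ sorted_wrt_upt]) (auto intro: mono)
  moreover have "\<forall>x\<in>set rest. 0 \<le> x \<and> x \<le> a"
    unfolding rest_def a_def using pos mono[of 5] by (auto intro: less_imp_le)
  ultimately have key: "a^2 + sum_list (map (\<lambda>x. x^2) rest) > (W-a)*(W-a) + a^2"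
    using shelf_inv[where ss=rest and m=a and h=a and a=a and w=a and W=W and H=W and P="a^2" and y=0] aW
    unfolding W_def by (simp add: power2_eq_square)
  have sr: "sum_list (map (\<lambda>x. x^2) rest) = (\<Sum>i\<in>{6..n}. (s i)^2)"
  proof -
    have "sum_list (map (\<lambda>x. x^2) rest) = sum_list (map (\<lambda>i. (s i)^2) [6..<n+1])"
      by (simp add: rest_def o_def)
    also have "\<dots> = sum (\<lambda>i. (s i)^2) (set [6..<n+1])"
      by (rule sum_set_upt_conv_sum_list_nat[symmetric])
    also have "\<dots> = (\<Sum>i\<in>{6..n}. (s i)^2)"
      by (rule sum.cong) auto
    finally show ?thesis .
  qed
  have split: "(\<Sum>i=1..n. (s i)^2) = (\<Sum>i=1..4. (s i)^2) + (s 5)^2 + (\<Sum>i\<in>{6..n}. (s i)^2)"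
  proof -
    have "{1..n} = {1..4} \<union> {5} \<union> {6..n}" using n5 by auto
    then show ?thesis by (simp add: sum.union_disjoint)
  qed
  have four: "(\<Sum>i=1..4. (s i)^2) \<ge> 4 * a^2"
  proof -
    have "(\<Sum>i=1..4. (s i)^2) \<ge> (\<Sum>i=1..(4::nat). a^2)"
    proof (rule sum_mono)
      fix i assume "i \<in> {1..(4::nat)}"
      then have "a \<le> s i" using mono[of i 5] n5 a_def by auto
      then show "a^2 \<le> (s i)^2" using a0 by (simp add: power_mono)
    qed
    then show ?thesis by simp
  qed
  have q: "(W-a)*(W-a) + 5*a^2 > 8/5"
  proof -
    have "6*((W-a)*(W-a) + 5*a^2) - 5*W^2 = (W - 6*a)^2"
      by (simp add: algebra_simps power2_eq_square)
    moreover have "(W - 6*a)^2 \<ge> 0" by simp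
    ultimately have "6*((W-a)*(W-a) + 5*a^2) \<ge> 5*W^2" by linarith
    moreover have "5*W^2 > 6*(8/5::real)" unfolding W_def by (simp add: power2_eq_square)
    ultimately show ?thesis by (simp add: algebra_simps)
  qed
  show ?thesis using split four key sr q a_def by simp
qed

end
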